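(* Let $A$ and $B$ be Latin squares of order $n$. Then $A$ and $B$ are weak orthogonal if and only if they are left orthogonal.
   Context: $\{\ket k\}_{k=0}^{n-1}$ is the computational basis of $\mathbb C^n$. A quantum Latin square (QLS) of order $n$ is an $n\times n$ array of vectors of $\mathbb C^n$ in which every row and every column is an orthonormal basis; the entry in column $i$, row $j$ of $\mathcal Q$ is $\ket{Q_{ij}}$. A Latin square is a QLS all of whose entries are computational basis states; identify it with the array of labels $L_{ij}\in\{0,\dots,n-1\}$ where $\ket{L_{ij}}$ is the entry. Two QLSs $\mathcal P,\mathcal Q$ are weak orthogonal if for all $i,j$ there is a unique $t$ with $\sum_{k=0}^{n-1}\ket k\langle Q_{ki}|P_{kj}\rangle=\ket t$. Two Latin squares $A,B$ are orthogonal if the pairs $(A_{ij},B_{ij})$ over all positions $(i,j)$ give all $n^2$ pairs of labels. The left conjugate of a Latin square $L$ is the Latin square $L'$ defined by $L'_{ik}=j$ if and only if $L_{ij}=k$ (left division in the quasigroup with Cayley table $L$). Two Latin squares are left orthogonal if their left conjugates are orthogonal. *)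

theory Defs
  imports Complex_Main
begin

text \<open>Vectors of C^n are represented as functions nat => complex, only the
coordinates 0..n-1 being relevant.  An n x n array of vectors is a function
Q :: nat => nat => (nat => complex), where Q i j is the entry in column i, row j.\<close>

type_synonym cvec = "nat \<Rightarrow> complex"

definition ket :: "nat \<Rightarrow> cvec" where
  "ket t = (\<lambda>k. if k = t then 1 else 0)"

definition vec_eq :: "nat \<Rightarrow> cvec \<Rightarrow> cvec \<Rightarrow> bool" where
  "vec_eq n u v \<longleftrightarrow> (\<forall>k<n. u k = v k)"

definition braket :: "nat \<Rightarrow> cvec \<Rightarrow> cvec \<Rightarrow> complex" where
  "braket n u v = (\<Sum>k<n. cnj (u k) * v k)"

definition orthonormal_basis :: "nat \<Rightarrow> (nat \<Rightarrow> cvec) \<Rightarrow> bool" where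
  "orthonormal_basis n f \<longleftrightarrow>
     (\<forall>a<n. \<forall>b<n. braket n (f a) (f b) = (if a = b then 1 else 0)) \<and>
     (\<forall>v. \<exists>c. vec_eq n v (\<lambda>k. \<Sum>m<n. c m * f m k))"

definition is_QLS :: "nat \<Rightarrow> (nat \<Rightarrow> nat \<Rightarrow> cvec) \<Rightarrow> bool" where
  "is_QLS n Q \<longleftrightarrow>
     (\<forall>j<n. orthonormal_basis n (\<lambda>i. Q i j)) \<and>
     (\<forall>i<n. orthonormal_basis n (\<lambda>j. Q i j))"

definition weak_orthogonal :: "nat \<Rightarrow> (nat \<Rightarrow> nat \<Rightarrow> cvec) \<Rightarrow> (nat \<Rightarrow> nat \<Rightarrow> cvec) \<Rightarrow> bool" where
  "weak_orthogonal n P Q \<longleftrightarrow>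
     (\<forall>i<n. \<forall>j<n. \<exists>!t. t < n \<and>
        vec_eq n (\<lambda>k. braket n (Q k i) (P k j)) (ket t))"

definition kets :: "(nat \<Rightarrow> nat \<Rightarrow> nat) \<Rightarrow> nat \<Rightarrow> nat \<Rightarrow> cvec" where
  "kets L = (\<lambda>i j. ket (L i j))"

definition latin_square :: "nat \<Rightarrow> (nat \<Rightarrow> nat \<Rightarrow> nat) \<Rightarrow> bool" where
  "latin_square n L \<longleftrightarrow> (\<forall>i<n. \<forall>j<n. L i j < n) \<and> is_QLS n (kets L)"

definition orthogonal_LS :: "nat \<Rightarrow> (nat \<Rightarrow> nat \<Rightarrow> nat) \<Rightarrow> (nat \<Rightarrow> nat \<Rightarrow> nat) \<Rightarrow> bool" where
  "orthogonal_LS n A B \<longleftrightarrow>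
     (\<lambda>(i,j). (A i j, B i j)) ` ({..<n} \<times> {..<n}) = {..<n} \<times> {..<n}"

definition left_conjugate :: "nat \<Rightarrow> (nat \<Rightarrow> nat \<Rightarrow> nat) \<Rightarrow> nat \<Rightarrow> nat \<Rightarrow> nat" where
  "left_conjugate n L = (\<lambda>i k. THE j. j < n \<and> L i j = k)"

definition left_orthogonal :: "nat \<Rightarrow> (nat \<Rightarrow> nat \<Rightarrow> nat) \<Rightarrow> (nat \<Rightarrow> nat \<Rightarrow> nat) \<Rightarrow> bool" where
  "left_orthogonal n A B \<longleftrightarrow> orthogonal_LS n (left_conjugate n A) (left_conjugate n B)"

end

theory Submission
  imports Defs
begin

lemma braket_ket: "braket n (ket a) (ket b) = (if a = b \<and> a < n then 1 else 0)"
proof -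
  have "braket n (ket a) (ket b) = (\<Sum>k<n. if k = a \<and> a = b then 1 else 0)"
    unfolding braket_def ket_def by (intro sum.cong) auto
  also have "\<dots> = (if a = b \<and> a < n then 1 else 0)"
    by (cases "a = b") (auto simp: sum.delta)
  finally show ?thesis .
qed

lemma row_inj:
  assumes "latin_square n A" "i < n"
  shows "inj_on (A i) {..<n}"
proof (rule inj_onI)
  fix a b assume ab: "a \<in> {..<n}" "b \<in> {..<n}" "A i a = A i b"
  from assms have ob: "orthonormal_basis n (\<lambda>j. kets A i j)"
    unfolding latin_square_def is_QLS_def by blast
  hence "braket n (ket (A i a)) (ket (A i b)) = (if a = b then 1 else 0)"
    using ab unfolding orthonormal_basis_def kets_def by blast
  moreover have "A i a < n" using assms ab unfolding latin_square_def by auto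
  moreover have "braket n (ket (A i a)) (ket (A i b)) = 1"
    using calculation(2) ab(3) by (simp add: braket_ket)
  ultimately show "a = b" by (metis zero_neq_one)
qed

lemma row_surj:
  assumes "latin_square n A" "i < n"
  shows "A i ` {..<n} = {..<n}"
  using assms row_inj[OF assms]
  by (intro endo_inj_surj) (auto simp: latin_square_def)

lemma lc_props:
  assumes "latin_square n A" "i < n" "k < n"
  shows "left_conjugate n A i k < n \<and> A i (left_conjugate n A i k) = k"
proof -
  have "k \<in> A i ` {..<n}" using row_surj[OF assms(1,2)] assms(3) by simp
  then obtain j where j: "j < n" "A i j = k" by auto
  have "\<exists>!j. j < n \<and> A i j = k"
    using j row_inj[OF assms(1,2)] by (auto simp: inj_on_def)
  thus ?thesis unfolding left_conjugate_def by (rule theI')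
qed

lemma lc_inv:
  assumes "latin_square n A" "i < n" "j < n"
  shows "left_conjugate n A i (A i j) = j"
proof -
  have k: "A i j < n" using assms unfolding latin_square_def by auto
  from lc_props[OF assms(1,2) k] row_inj[OF assms(1,2)] assms(3)
  show ?thesis by (auto simp: inj_on_def)
qed

lemma weak_iff:
  assumes "latin_square n A" "latin_square n B"
  shows "weak_orthogonal n (kets A) (kets B) \<longleftrightarrow>
    (\<forall>i<n. \<forall>j<n. \<exists>t<n. \<forall>k<n. (B k i = A k j \<longleftrightarrow> k = t))"
proof -
  have eq: "vec_eq n (\<lambda>k. braket n (kets B k i) (kets A k j)) (ket t) \<longleftrightarrow>
      (\<forall>k<n. (B k i = A k j \<longleftrightarrow> k = t))" if "i < n" "j < n" for i j t
  proof -
    have "\<And>k. k < n \<Longrightarrow> B k i < n" using assms(2) that unfolding latin_square_def by auto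
    thus ?thesis unfolding vec_eq_def kets_def braket_ket by (auto simp: ket_def)
  qed
  have uq: "(\<exists>!t. t < n \<and> (\<forall>k<n. (B k i = A k j \<longleftrightarrow> k = t))) \<longleftrightarrow>
     (\<exists>t<n. \<forall>k<n. (B k i = A k j \<longleftrightarrow> k = t))" for i j
    by blast
  show ?thesis unfolding weak_orthogonal_def using eq uq by simp
qed

theorem lemma21:
  fixes n :: nat and A B :: "nat \<Rightarrow> nat \<Rightarrow> nat"
  assumes "latin_square n A" and "latin_square n B"
  shows "weak_orthogonal n (kets A) (kets B) \<longleftrightarrow> left_orthogonal n A B"
proof -
  let ?A' = "left_conjugate n A" and ?B' = "left_conjugate n B"
  let ?f = "\<lambda>(i,k). (?A' i k, ?B' i k)"
  let ?S = "{..<n} \<times> {..<n}"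
  have sub: "?f ` ?S \<subseteq> ?S" using lc_props[OF assms(1)] lc_props[OF assms(2)] by auto
  have LO: "left_orthogonal n A B \<longleftrightarrow> ?f ` ?S = ?S"
    unfolding left_orthogonal_def orthogonal_LS_def by simp
  show ?thesis unfolding weak_iff[OF assms] LO
  proof
    assume H: "\<forall>i<n. \<forall>j<n. \<exists>t<n. \<forall>k<n. (B k i = A k j \<longleftrightarrow> k = t)"
    show "?f ` ?S = ?S"
    proof (rule antisym[OF sub], rule subsetI)
      fix p assume "p \<in> ?S"
      then obtain j j' where p: "p = (j, j')" "j < n" "j' < n" by auto
      from H p obtain t where t: "t < n" "B t j' = A t j" by blast
      have "A t j < n" using assms(1) t p unfolding latin_square_def by auto
      moreover have "?f (t, A t j) = p"
        using lc_inv[OF assms(1) t(1) p(2)] lc_inv[OF assms(2) t(1) p(3)] t p by simp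
      ultimately show "p \<in> ?f ` ?S" using t by force
    qed
  next
    assume S: "?f ` ?S = ?S"
    have inj: "inj_on ?f ?S"
      by (rule eq_card_imp_inj_on) (auto simp: S)
    show "\<forall>i<n. \<forall>j<n. \<exists>t<n. \<forall>k<n. (B k i = A k j \<longleftrightarrow> k = t)"
    proof (intro allI impI)
      fix j' j assume jj: "j' < n" "j < n"
      have "(j, j') \<in> ?f ` ?S" using S jj by auto
      then obtain t k where tk: "t < n" "k < n" "?A' t k = j" "?B' t k = j'" by auto
      have e: "B t j' = A t j"
        using lc_props[OF assms(1) tk(1,2)] lc_props[OF assms(2) tk(1,2)] tk by simp
      show "\<exists>t<n. \<forall>k<n. (B k j' = A k j \<longleftrightarrow> k = t)"
      proof (rule exI[of _ t], intro conjI allI impI)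
        show "t < n" by (rule tk(1))
      next
        fix s assume s: "s < n"
        show "B s j' = A s j \<longleftrightarrow> s = t"
        proof
          assume es: "B s j' = A s j"
          have a1: "A s j < n" "A t j < n" using assms(1) s tk jj unfolding latin_square_def by auto
          have "?f (s, A s j) = (j, j')" "?f (t, A t j) = (j, j')"
            using lc_inv[OF assms(1) s jj(2)] lc_inv[OF assms(2) s jj(1)]
                  lc_inv[OF assms(1) tk(1) jj(2)] lc_inv[OF assms(2) tk(1) jj(1)] es e by auto
          hence "?f (s, A s j) = ?f (t, A t j)" by simp
          hence "(s, A s j) = (t, A t j)"
            by (rule inj_onD[OF inj]) (use s tk a1 in auto)
          thus "s = t" by simp
        qed (use e in simp)
      qed
    qed
  qed
qed

end
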